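(* Let $\{(\boldsymbol{x}_j,y_j)\}_{j=1}^n\subset\mathbb{R}^d\times\mathbb{R}$ be a training set and let $f\in\mathcal{F}_k$ be a stable solution for SGD with step size $\eta>0$. Assume that none of the knots of $f$ contains a training point $\boldsymbol{x}_j$. Then $$\|f\|_{\mathcal{R},g}\le \frac{1}{\eta}-\frac{1}{2},$$ where $$\|f\|_{\mathcal{R},g}=\int_{\mathbb{S}^{d-1}\times\mathbb{R}}\big|[(\mathcal{R}^* )^{-1}\Delta f](\boldsymbol{v},b)\big|\,g(\boldsymbol{v},b)\,\mathrm{d}s(\boldsymbol{v})\,\mathrm{d}b,$$ with $g(\boldsymbol{v},b)=\min\big(\tilde g(\boldsymbol{v},b),\tilde g(-\boldsymbol{v},-b)\big)$ and $$\tilde g(\boldsymbol{v},b)=\mathbb{P}^2(\boldsymbol{X}^\top\boldsymbol{v}>b)\,\mathbb{E}\big[\boldsymbol{X}^\top\boldsymbol{v}-b\,\big|\,\boldsymbol{X}^\top\boldsymbol{v}>b\big]\sqrt{\big\|\mathbb{E}[\boldsymbol{X}\mid\boldsymbol{X}^\top\boldsymbol{v}>b]\big\|^2+1},$$ $\boldsymbol{X}$ being drawn uniformly at random from $\{\boldsymbol{x}_j\}_{j=1}^n$.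
   Context: $\sigma(t)=\max(t,0)$. $\mathcal{F}_k$ is the set of functions $f(\boldsymbol{x})=\sum_{i=1}^k w^{(2)}_i\sigma(\boldsymbol{x}^\top\boldsymbol{w}^{(1)}_i+b^{(1)}_i)+b^{(2)}$ on $\mathbb{R}^d$; the parameter vector $\boldsymbol{\theta}=(\boldsymbol{w}^{(1)}_1,\dots,\boldsymbol{w}^{(1)}_k,\boldsymbol{b}^{(1)},\boldsymbol{w}^{(2)},b^{(2)})\in\mathbb{R}^{(d+2)k+1}$ determines $f_{\boldsymbol\theta}\in\mathcal{F}_k$, and a minimum $\boldsymbol\theta^*$ "corresponds to" $f$ if $f_{\boldsymbol\theta^*}=f$. A knot of $f$ is a boundary between two linear pieces of $f$. The loss is $\mathcal{L}(\boldsymbol\theta)=\frac{1}{2n}\sum_{j=1}^n(f_{\boldsymbol\theta}(\boldsymbol{x}_j)-y_j)^2=\frac1n\sum_j\ell_j(\boldsymbol\theta)$; a solution is $f\in\mathcal{F}_k$ with $f(\boldsymbol{x}_j)=y_j$ for all $j$. SGD: $\boldsymbol\theta_{t+1}=\boldsymbol\theta_t-\eta\nabla\hat{\mathcal{L}}_t(\boldsymbol\theta_t)$, $\hat{\mathcal{L}}_t=\frac1B\sum_{j\in\mathfrak{B}_t}\ell_j$, batches $\mathfrak{B}_t$ of size $B$ drawn uniformly from the dataset independently across iterations. A twice differentiable minimum $\boldsymbol\theta^*$ of $\mathcal{L}$ is $\varepsilon$ linearly stable if for the linearized dynamics $\boldsymbol\theta_{t+1}=\boldsymbol\theta_t-\eta(\nabla\hat{\mathcal{L}}_t(\boldsymbol\theta^*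 )+\nabla^2\hat{\mathcal{L}}_t(\boldsymbol\theta^* )(\boldsymbol\theta_t-\boldsymbol\theta^* ))$ and every $\boldsymbol\theta_0$ in the $\varepsilon$-ball around $\boldsymbol\theta^*$, $\limsup_{t\to\infty}\mathbb{E}\|\boldsymbol\theta_t-\boldsymbol\theta^*\|\le\varepsilon$. A solution $f$ is stable for step size $\eta$ if some minimum $\boldsymbol\theta^*$ of $\mathcal{L}$ corresponding to $f$ is linearly stable for SGD with step size $\eta$. Radon transform: $\mathcal{R}\varphi(\boldsymbol{v},b)=\int_{\boldsymbol{v}^\top\boldsymbol{x}=b}\varphi\,\mathrm{d}s$ for $(\boldsymbol v,b)\in\mathbb{S}^{d-1}\times\mathbb{R}$; dual $\mathcal{R}^*\psi(\boldsymbol{x})=\int_{\mathbb{S}^{d-1}}\psi(\boldsymbol v,\boldsymbol v^\top\boldsymbol x)\,\mathrm{d}s(\boldsymbol v)$. $\Delta f$ is the distributional Laplacian, and $(\mathcal{R}^* )^{-1}\Delta f$ is the distribution on $\mathbb{S}^{d-1}\times\mathbb{R}$ defined by $\langle(\mathcal{R}^* )^{-1}\Delta f,\phi\rangle=\langle\Delta f,\mathcal{R}^{-1}\phi\rangle$ for $\phi$ in $\mathcal{S}_H$, the image of the Schwartz space $\mathcal{S}(\mathbb{R}^d)$ under $\mathcal{R}$. For $f(\boldsymbol x)=\sum_{i}a_i\sigma(\boldsymbol v_i^\top\boldsymbol x-b_i)+\boldsymbol{q}^\top\boldsymbol x+c$ with $\|\boldsymbol v_i\|=1$, one has $(\mathcal{R}^*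 )^{-1}\Delta f=\sum_i a_i\delta_{(\boldsymbol v_i,b_i)}$, and the integral $\|f\|_{\mathcal{R},g}$ is the integral of $g$ against the total variation measure of this measure (equal to $\sum_i|a_i|g(\boldsymbol v_i,b_i)$ when the pairs $(\boldsymbol v_i,b_i)$ are distinct and the $a_i\neq0$). *)

theory Defs
  imports "HOL-Analysis.Analysis"
begin

definition relu :: "real \<Rightarrow> real" where
  "relu t = max t 0"

text \<open>The number of neurons k is the cardinality of the finite index type 'k;
  the input space R^d is the Euclidean space 'a.\<close>
type_synonym ('a, 'k) params = "('a ^ 'k) \<times> (real ^ 'k) \<times> (real ^ 'k) \<times> real"

definition net :: "('a::euclidean_space, 'k::finite) params \<Rightarrow> 'a \<Rightarrow> real" where
  "net \<theta> x = (case \<theta> of (W1, b1, w2, b2) \<Rightarrow>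
      (\<Sum>i\<in>UNIV. w2 $ i * relu (x \<bullet> (W1 $ i) + b1 $ i)) + b2)"

definition sample_loss ::
  "(nat \<Rightarrow> 'a::euclidean_space) \<Rightarrow> (nat \<Rightarrow> real) \<Rightarrow> nat \<Rightarrow> ('a, 'k::finite) params \<Rightarrow> real" where
  "sample_loss xs ys j \<theta> = (net \<theta> (xs j) - ys j)^2 / 2"

definition loss ::
  "(nat \<Rightarrow> 'a::euclidean_space) \<Rightarrow> (nat \<Rightarrow> real) \<Rightarrow> nat \<Rightarrow> ('a, 'k::finite) params \<Rightarrow> real" where
  "loss xs ys n \<theta> = (\<Sum>j<n. sample_loss xs ys j \<theta>) / real n"

definition twice_diff_at ::
  "('p::euclidean_space \<Rightarrow> real) \<Rightarrow> 'p \<Rightarrow> ('p \<Rightarrow> 'p) \<Rightarrow> ('p \<Rightarrow> 'p) \<Rightarrow> bool" where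
  "twice_diff_at l th0 G H \<longleftrightarrow>
     (\<exists>e>0. \<forall>th\<in>ball th0 e. (l has_derivative (\<lambda>h. G th \<bullet> h)) (at th)) \<and>
     (G has_derivative H) (at th0)"

text \<open>Batches: subsets of the index set of size B, drawn uniformly (without replacement).\<close>
definition batches :: "nat \<Rightarrow> nat \<Rightarrow> nat set set" where
  "batches n B = {S. S \<subseteq> {..<n} \<and> card S = B}"

definition lin_step ::
  "real \<Rightarrow> nat \<Rightarrow> (nat \<Rightarrow> 'p::euclidean_space \<Rightarrow> 'p) \<Rightarrow> (nat \<Rightarrow> 'p \<Rightarrow> 'p) \<Rightarrow> 'p \<Rightarrow> 'p \<Rightarrow> nat set \<Rightarrow> 'p" where
  "lin_step \<eta> B G H ths th S =
     th - \<eta> *\<^sub>R ((1 / real B) *\<^sub>R (\<Sum>j\<in>S. G j ths + H j (th - ths)))"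

definition lin_iter ::
  "real \<Rightarrow> nat \<Rightarrow> (nat \<Rightarrow> 'p::euclidean_space \<Rightarrow> 'p) \<Rightarrow> (nat \<Rightarrow> 'p \<Rightarrow> 'p) \<Rightarrow> 'p \<Rightarrow> 'p \<Rightarrow> nat set list \<Rightarrow> 'p" where
  "lin_iter \<eta> B G H ths th0 bs = foldl (lin_step \<eta> B G H ths) th0 bs"

text \<open>E || theta_t - theta* ||, expectation over independent uniform batches.\<close>
definition expected_dev ::
  "nat \<Rightarrow> nat \<Rightarrow> real \<Rightarrow> (nat \<Rightarrow> 'p::euclidean_space \<Rightarrow> 'p) \<Rightarrow> (nat \<Rightarrow> 'p \<Rightarrow> 'p) \<Rightarrow> 'p \<Rightarrow> 'p \<Rightarrow> nat \<Rightarrow> real" where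
  "expected_dev n B \<eta> G H ths th0 t =
     (\<Sum>bs\<in>{bs. length bs = t \<and> set bs \<subseteq> batches n B}.
        norm (lin_iter \<eta> B G H ths th0 bs - ths)) / real (card (batches n B)) ^ t"

definition eps_linearly_stable ::
  "(nat \<Rightarrow> 'a::euclidean_space) \<Rightarrow> (nat \<Rightarrow> real) \<Rightarrow> nat \<Rightarrow> nat \<Rightarrow> real \<Rightarrow> ('a, 'k::finite) params \<Rightarrow> real \<Rightarrow> bool" where
  "eps_linearly_stable xs ys n B \<eta> ths \<epsilon> \<longleftrightarrow>
     (\<exists>e>0. \<forall>th\<in>ball ths e. loss xs ys n ths \<le> loss xs ys n th) \<and>
     (\<exists>G H. (\<forall>j<n. twice_diff_at (sample_loss xs ys j) ths (G j) (H j)) \<and>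
        (\<forall>th0\<in>ball ths \<epsilon>.
           limsup (\<lambda>t. ereal (expected_dev n B \<eta> G H ths th0 t)) \<le> ereal \<epsilon>))"

definition linearly_stable ::
  "(nat \<Rightarrow> 'a::euclidean_space) \<Rightarrow> (nat \<Rightarrow> real) \<Rightarrow> nat \<Rightarrow> nat \<Rightarrow> real \<Rightarrow> ('a, 'k::finite) params \<Rightarrow> bool" where
  "linearly_stable xs ys n B \<eta> ths \<longleftrightarrow> (\<exists>\<epsilon>>0. eps_linearly_stable xs ys n B \<eta> ths \<epsilon>)"

definition stable_solution ::
  "'k::finite itself \<Rightarrow> (nat \<Rightarrow> 'a::euclidean_space) \<Rightarrow> (nat \<Rightarrow> real) \<Rightarrow> nat \<Rightarrow> nat \<Rightarrow> real \<Rightarrow> ('a \<Rightarrow> real) \<Rightarrow> bool" where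
  "stable_solution _ xs ys n B \<eta> f \<longleftrightarrow>
     (\<forall>j<n. f (xs j) = ys j) \<and>
     (\<exists>ths :: ('a, 'k) params. net ths = f \<and> linearly_stable xs ys n B \<eta> ths)"

text \<open>Union of all knots (boundaries between linear pieces): the closure of the set of
  points where f is not differentiable.\<close>
definition knot_set :: "('a::euclidean_space \<Rightarrow> real) \<Rightarrow> 'a set" where
  "knot_set f = closure {x. \<not> f differentiable (at x)}"

text \<open>X uniform on the training points (indices j < n).\<close>
definition g_tilde :: "(nat \<Rightarrow> 'a::euclidean_space) \<Rightarrow> nat \<Rightarrow> 'a \<Rightarrow> real \<Rightarrow> real" where
  "g_tilde xs n v b =
     (let S = {j. j < n \<and> xs j \<bullet> v > b} in
      if S = {} then 0 else
        (real (card S) / real n)^2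
        * ((\<Sum>j\<in>S. xs j \<bullet> v - b) / real (card S))
        * sqrt ((norm ((1 / real (card S)) *\<^sub>R (\<Sum>j\<in>S. xs j)))^2 + 1))"

definition g_weight :: "(nat \<Rightarrow> 'a::euclidean_space) \<Rightarrow> nat \<Rightarrow> 'a \<Rightarrow> real \<Rightarrow> real" where
  "g_weight xs n v b = min (g_tilde xs n v b) (g_tilde xs n (- v) (- b))"

text \<open>For such a representation (R^* )^(-1) Delta f is the (even) measure sum a_i delta_(v_i,b_i).\<close>
definition canon_repr ::
  "('a::euclidean_space \<Rightarrow> real) \<Rightarrow> nat \<Rightarrow> (nat \<Rightarrow> real) \<Rightarrow> (nat \<Rightarrow> 'a) \<Rightarrow> (nat \<Rightarrow> real) \<Rightarrow> 'a \<Rightarrow> real \<Rightarrow> bool" where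
  "canon_repr f m a v b q c \<longleftrightarrow>
     (\<forall>i<m. norm (v i) = 1 \<and> a i \<noteq> 0) \<and>
     (\<forall>i<m. \<forall>j<m. i \<noteq> j \<longrightarrow> (v i, b i) \<noteq> (v j, b j) \<and> (v i, b i) \<noteq> (- v j, - b j)) \<and>
     (\<forall>x. f x = (\<Sum>i<m. a i * relu (v i \<bullet> x - b i)) + q \<bullet> x + c)"

text \<open>The integral of g against the total variation of (R^* )^(-1) Delta f.\<close>
definition radon_norm :: "('a::euclidean_space \<Rightarrow> real \<Rightarrow> real) \<Rightarrow> ('a \<Rightarrow> real) \<Rightarrow> real" where
  "radon_norm g f = (SOME r. \<exists>m a v b q c. canon_repr f m a v b q c \<and>
                        r = (\<Sum>i<m. \<bar>a i\<bar> * g (v i) (b i)))"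

end

theory Submission
  imports Defs
begin


lemma relu_pos[simp]: "t \<ge> 0 \<Longrightarrow> relu t = t" and relu_neg[simp]: "t \<le> 0 \<Longrightarrow> relu t = 0"
  by (auto simp: relu_def)

lemma relu_nonneg: "relu t \<ge> 0" by (simp add: relu_def)

lemma avoid_point:
  fixes v :: "'i \<Rightarrow> 'a::euclidean_space"
  assumes "finite Os" "norm w = 1" "\<forall>k\<in>Os. norm (v k) = 1"
    "\<forall>k\<in>Os. (v k, b k) \<noteq> (w, \<beta>) \<and> (v k, b k) \<noteq> (-w, -\<beta>)"
  shows "\<exists>p. w \<bullet> p = \<beta> \<and> (\<forall>k\<in>Os. v k \<bullet> p \<noteq> b k)"
  using assms(1,3,4)
proof (induction Os rule: finite_induct)
  case empty
  have "w \<bullet> (\<beta> *\<^sub>R w) = \<beta>" using assms(2) by (simp add: norm_eq_1)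
  then show ?case by blast
next
  case (insert k I)
  then obtain p where p: "w \<bullet> p = \<beta>" "\<forall>i\<in>I. v i \<bullet> p \<noteq> b i" by auto
  show ?case
  proof (cases "v k \<bullet> p = b k")
    case False
    then show ?thesis using p by auto
  next
    case True
    define u where "u = v k - (v k \<bullet> w) *\<^sub>R w"
    have ww: "w \<bullet> w = 1" using assms(2) by (simp add: norm_eq_1)
    have wu: "w \<bullet> u = 0" unfolding u_def using ww by (simp add: inner_diff_right inner_commute)
    have uv: "u \<bullet> v k = u \<bullet> u"
      unfolding u_def using ww by (simp add: inner_diff_right inner_diff_left inner_commute algebra_simps)
    have vk1: "norm (v k) = 1" using insert by auto
    have u0: "u \<noteq> 0"
    proof
      assume "u = 0"
      then have vk: "v k = (v k \<bullet> w) *\<^sub>R w" unfolding u_def by simp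
      then have "norm (v k) = \<bar>v k \<bullet> w\<bar>" using assms(2) by (metis norm_scaleR mult.right_neutral)
      then have "v k \<bullet> w = 1 \<or> v k \<bullet> w = -1" using vk1 by auto
      then show False
      proof
        assume "v k \<bullet> w = 1"
        then have "v k = w" using vk by simp
        moreover then have "b k = \<beta>" using True p by simp
        ultimately show False using insert by auto
      next
        assume "v k \<bullet> w = -1"
        then have "v k = - w" using vk by simp
        moreover then have "b k = -\<beta>" using True p by simp
        ultimately show False using insert by auto
      qed
    qed
    have "\<forall>\<^sub>F t in at (0::real). \<forall>i\<in>I. v i \<bullet> (p + t *\<^sub>R u) \<noteq> b i"
    proof (rule eventually_ball_finite[OF insert(1)], rule ballI)
      fix i assume "i \<in> I"
      have "((\<lambda>t. v i \<bullet> (p + t *\<^sub>R u) - b i) \<longlongrightarrow> v i \<bullet> (p + 0 *\<^sub>R u) - b i) (at (0::real))"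
        by (intro tendsto_intros)
      moreover have "v i \<bullet> (p + 0 *\<^sub>R u) - b i \<noteq> 0" using p \<open>i\<in>I\<close> by simp
      ultimately have "\<forall>\<^sub>F t in at (0::real). v i \<bullet> (p + t *\<^sub>R u) - b i \<noteq> 0"
        by (rule tendsto_imp_eventually_ne)
      then show "\<forall>\<^sub>F t in at (0::real). v i \<bullet> (p + t *\<^sub>R u) \<noteq> b i" by simp
    qed
    then obtain d where d: "d > 0" "\<And>t. 0 < dist t 0 \<Longrightarrow> dist t 0 < d \<Longrightarrow> \<forall>i\<in>I. v i \<bullet> (p + t *\<^sub>R u) \<noteq> b i"
      unfolding eventually_at by auto
    define t where "t = d / 2"
    have t: "0 < t" "\<forall>i\<in>I. v i \<bullet> (p + t *\<^sub>R u) \<noteq> b i" using d unfolding t_def by auto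
    have "v k \<bullet> (p + t *\<^sub>R u) - b k = t * (u \<bullet> u)"
      using True uv by (simp add: inner_add_right inner_commute)
    also have "\<dots> \<noteq> 0" using t u0 by simp
    finally have "v k \<bullet> (p + t *\<^sub>R u) \<noteq> b k" by simp
    moreover have "w \<bullet> (p + t *\<^sub>R u) = \<beta>" using p wu by (simp add: inner_add_right)
    ultimately show ?thesis using t by auto
  qed
qed

lemma kink_zero:
  fixes v :: "'i \<Rightarrow> 'a::euclidean_space"
  assumes fin: "finite I" and unit: "\<forall>k\<in>I. norm (v k) = 1" and w: "norm w = 1"
    and eq: "\<forall>x. (\<Sum>k\<in>I. c k * relu (v k \<bullet> x - b k)) + q \<bullet> x + c0 = 0"
  shows "(\<Sum>k\<in>{k\<in>I. (v k, b k) = (w, \<beta>) \<or> (v k, b k) = (-w, -\<beta>)}. c k) = 0"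
proof -
  define Kp where "Kp = {k\<in>I. (v k, b k) = (w, \<beta>)}"
  define Km where "Km = {k\<in>I. (v k, b k) = (-w, -\<beta>)}"
  define Os where "Os = I - (Kp \<union> Km)"
  have w0: "w \<noteq> 0" using w by auto
  have ww: "w \<bullet> w = 1" using w by (simp add: norm_eq_1)
  have wm: "w \<noteq> -w"
  proof
    assume "w = -w"
    then have "w \<bullet> w = -(w \<bullet> w)" by (metis inner_minus_left)
    then show False using ww by simp
  qed
  have disj: "Kp \<inter> Km = {}" using wm unfolding Kp_def Km_def by auto
  have K: "{k\<in>I. (v k, b k) = (w, \<beta>) \<or> (v k, b k) = (-w, -\<beta>)} = Kp \<union> Km"
    unfolding Kp_def Km_def by auto
  have finK: "finite Kp" "finite Km" "finite Os" using fin unfolding Kp_def Km_def Os_def by auto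
  have IU: "I = (Kp \<union> Km) \<union> Os" unfolding Kp_def Km_def Os_def by auto
  have "\<exists>p. w \<bullet> p = \<beta> \<and> (\<forall>k\<in>Os. v k \<bullet> p \<noteq> b k)"
    by (rule avoid_point[OF finK(3) w]) (use unit in \<open>auto simp: Os_def Kp_def Km_def\<close>)
  then obtain p where p: "w \<bullet> p = \<beta>" "\<forall>k\<in>Os. v k \<bullet> p \<noteq> b k" by blast
  define L where "L k t = (if v k \<bullet> p > b k then v k \<bullet> p - b k + t * (v k \<bullet> w) else 0)" for k t
  have "\<forall>\<^sub>F t in at (0::real). \<forall>k\<in>Os. relu (v k \<bullet> (p + t *\<^sub>R w) - b k) = L k t"
  proof (rule eventually_ball_finite[OF finK(3)], rule ballI)
    fix k assume k: "k \<in> Os"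
    have lim: "((\<lambda>t. v k \<bullet> (p + t *\<^sub>R w) - b k) \<longlongrightarrow> v k \<bullet> (p + 0 *\<^sub>R w) - b k) (at (0::real))"
      by (intro tendsto_intros)
    show "\<forall>\<^sub>F t in at (0::real). relu (v k \<bullet> (p + t *\<^sub>R w) - b k) = L k t"
    proof (cases "v k \<bullet> p > b k")
      case True
      have "\<forall>\<^sub>F t in at (0::real). v k \<bullet> (p + t *\<^sub>R w) - b k > 0"
        by (rule order_tendstoD(1)[OF lim]) (use True in simp)
      then show ?thesis
        by eventually_elim (use True in \<open>auto simp: L_def inner_add_right\<close>)
    next
      case False
      then have "v k \<bullet> p < b k" using p k by force
      have "\<forall>\<^sub>F t in at (0::real). v k \<bullet> (p + t *\<^sub>R w) - b k < 0"
        by (rule order_tendstoD(2)[OF lim]) (use \<open>v k \<bullet> p < b k\<close> in simp)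
      then show ?thesis
        by eventually_elim (use False in \<open>auto simp: L_def\<close>)
    qed
  qed
  then obtain d where d: "d > 0"
    "\<And>t. 0 < dist t 0 \<Longrightarrow> dist t 0 < d \<Longrightarrow> \<forall>k\<in>Os. relu (v k \<bullet> (p + t *\<^sub>R w) - b k) = L k t"
    unfolding eventually_at by auto
  define Sp where "Sp = (\<Sum>k\<in>Kp. c k)"
  define Sm where "Sm = (\<Sum>k\<in>Km. c k)"
  define A where "A = (\<Sum>k\<in>Os. c k * L k 0) + q \<bullet> p + c0"
  define Bc where "Bc = (\<Sum>k\<in>Os. if v k \<bullet> p > b k then c k * (v k \<bullet> w) else 0) + q \<bullet> w"
  have key: "(if t > 0 then Sp * t else Sm * (-t)) + A + Bc * t = 0"
    if t: "0 < \<bar>t\<bar>" "\<bar>t\<bar> < d" for t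
  proof -
    have e: "(\<Sum>k\<in>I. c k * relu (v k \<bullet> (p + t *\<^sub>R w) - b k)) + q \<bullet> (p + t *\<^sub>R w) + c0 = 0"
      using eq by blast
    have s1: "(\<Sum>k\<in>I. c k * relu (v k \<bullet> (p + t *\<^sub>R w) - b k)) =
      (\<Sum>k\<in>Kp. c k * relu (v k \<bullet> (p + t *\<^sub>R w) - b k)) + (\<Sum>k\<in>Km. c k * relu (v k \<bullet> (p + t *\<^sub>R w) - b k))
      + (\<Sum>k\<in>Os. c k * relu (v k \<bullet> (p + t *\<^sub>R w) - b k))"
      apply (subst IU)
      apply (subst sum.union_disjoint)
      using finK disj apply (auto simp: Os_def)[3]
      apply (subst sum.union_disjoint)
      using finK disj apply (auto simp: Os_def)
      done
    have s2: "(\<Sum>k\<in>Kp. c k * relu (v k \<bullet> (p + t *\<^sub>R w) - b k)) = Sp * relu t"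
      unfolding Sp_def sum_distrib_right
      by (rule sum.cong) (auto simp: Kp_def inner_add_right ww p)
    have s3: "(\<Sum>k\<in>Km. c k * relu (v k \<bullet> (p + t *\<^sub>R w) - b k)) = Sm * relu (-t)"
      unfolding Sm_def sum_distrib_right
      by (rule sum.cong) (auto simp: Km_def inner_add_right ww p)
    have s4: "(\<Sum>k\<in>Os. c k * relu (v k \<bullet> (p + t *\<^sub>R w) - b k)) = (\<Sum>k\<in>Os. c k * L k t)"
      by (rule sum.cong) (use d(2)[of t] t in auto)
    have s5: "(\<Sum>k\<in>Os. c k * L k t) = (\<Sum>k\<in>Os. c k * L k 0) + t * (\<Sum>k\<in>Os. if v k \<bullet> p > b k then c k * (v k \<bullet> w) else 0)"
      unfolding sum_distrib_left sum.distrib[symmetric]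
      by (rule sum.cong) (auto simp: L_def algebra_simps)
    have "Sp * relu t + Sm * relu (-t) + ((\<Sum>k\<in>Os. c k * L k 0) + t * (\<Sum>k\<in>Os. if v k \<bullet> p > b k then c k * (v k \<bullet> w) else 0))
        + (q \<bullet> p + t * (q \<bullet> w)) + c0 = 0"
      using e unfolding s1 s2 s3 s4 s5 by (simp add: inner_add_right)
    then show ?thesis unfolding A_def Bc_def using t by (cases "t > 0") (auto simp: algebra_simps)
  qed
  have k1: "Sp * (d/2) + A + Bc * (d/2) = 0" using key[of "d/2"] d(1) by auto
  have k2: "Sp * (d/4) + A + Bc * (d/4) = 0" using key[of "d/4"] d(1) by auto
  have k3: "Sm * (d/2) + A + Bc * (-d/2) = 0" using key[of "-d/2"] d(1) by auto
  have k4: "Sm * (d/4) + A + Bc * (-d/4) = 0" using key[of "-d/4"] d(1) by auto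
  have "(Sp + Bc) * (d/4) = 0" using k1 k2 by (simp add: algebra_simps)
  then have "Sp + Bc = 0" using d(1) by simp
  moreover have "(Sm - Bc) * (d/4) = (Sm * (d/2) + A + Bc * (-d/2)) - (Sm * (d/4) + A + Bc * (-d/4))"
    by (simp add: field_simps)
  then have "(Sm - Bc) * (d/4) = 0" using k3 k4 by linarith
  then have "Sm - Bc = 0" using d(1) by simp
  ultimately have "Sp + Sm = 0" by simp
  then show ?thesis unfolding K Sp_def Sm_def using finK disj by (simp add: sum.union_disjoint)
qed



definition rep :: "('a::euclidean_space \<Rightarrow> real) \<Rightarrow> nat \<Rightarrow> (nat \<Rightarrow> real) \<Rightarrow> (nat \<Rightarrow> 'a) \<Rightarrow> (nat \<Rightarrow> real) \<Rightarrow> 'a \<Rightarrow> real \<Rightarrow> bool" where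
  "rep f m a v b q c \<longleftrightarrow> (\<forall>i<m. norm (v i) = 1) \<and>
     (\<forall>x. f x = (\<Sum>i<m. a i * relu (v i \<bullet> x - b i)) + q \<bullet> x + c)"

definition skip :: "nat \<Rightarrow> nat \<Rightarrow> nat" where
  "skip j i = (if i < j then i else Suc i)"

lemma skip_less: "j < m \<Longrightarrow> k < m - 1 \<Longrightarrow> skip j k < m"
  by (auto simp: skip_def)

lemma sum_skip:
  assumes "j < (m::nat)"
  shows "(\<Sum>i<m. F i) = F j + (\<Sum>i<m-1. F (skip j i))"
proof -
  have inj: "inj_on (skip j) {..<m-1}"
    unfolding inj_on_def skip_def by (auto split: if_splits)
  have im: "skip j ` {..<m-1} = {..<m} - {j}"
  proof
    show "skip j ` {..<m-1} \<subseteq> {..<m} - {j}" using assms by (auto simp: skip_def)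
  next
    show "{..<m} - {j} \<subseteq> skip j ` {..<m-1}"
    proof
      fix y assume y: "y \<in> {..<m} - {j}"
      show "y \<in> skip j ` {..<m-1}"
      proof (cases "y < j")
        case True
        then have "skip j y = y" by (simp add: skip_def)
        moreover have "y < m - 1" using True assms by simp
        ultimately show ?thesis by force
      next
        case False
        then have "y > j" using y by auto
        then have "skip j (y - 1) = y" by (simp add: skip_def)
        moreover have "y - 1 < m - 1" using y \<open>y > j\<close> by auto
        ultimately show ?thesis by force
      qed
    qed
  qed
  have bij: "bij_betw (skip j) {..<m-1} ({..<m} - {j})"
    using inj im by (simp add: bij_betw_def)
  have "(\<Sum>i<m. F i) = F j + (\<Sum>i\<in>{..<m} - {j}. F i)"
    using assms by (subst sum.remove[of _ j]) auto
  also have "(\<Sum>i\<in>{..<m} - {j}. F i) = (\<Sum>i<m-1. F (skip j i))"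
    using sum.reindex_bij_betw[OF bij, of F] by simp
  finally show ?thesis .
qed

lemma relu_flip: "relu (- t) = relu t - t" by (simp add: relu_def)

lemma rep_canon:
  assumes "rep f m a v b q c"
  shows "\<exists>m a v b q c. canon_repr f m a v b q c"
  using assms
proof (induction m arbitrary: a v b q c rule: less_induct)
  case (less m)
  define T where "T k x = relu (v k \<bullet> x - b k)" for k x
  have unit: "\<forall>i<m. norm (v i) = 1" and feq: "\<And>x. f x = (\<Sum>i<m. a i * T i x) + q \<bullet> x + c"
    using less.prems unfolding rep_def T_def by auto
  show ?case
  proof (cases "canon_repr f m a v b q c")
    case True
    then show ?thesis by blast
  next
    case False
    then have "(\<exists>j<m. a j = 0) \<or> (\<exists>i<m. \<exists>j<m. i \<noteq> j \<and> ((v i, b i) = (v j, b j) \<or> (v i, b i) = (- v j, - b j)))"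
      using unit feq unfolding canon_repr_def T_def by blast
    then show ?thesis
    proof
      assume "\<exists>j<m. a j = 0"
      then obtain j where j: "j < m" "a j = 0" by blast
      have "rep f (m-1) (a \<circ> skip j) (v \<circ> skip j) (b \<circ> skip j) q c"
        unfolding rep_def
      proof (intro conjI allI impI)
        fix i assume "i < m - 1" then show "norm ((v \<circ> skip j) i) = 1" using unit skip_less[OF j(1)] by auto
      next
        fix x show "f x = (\<Sum>i<m-1. (a \<circ> skip j) i * relu ((v \<circ> skip j) i \<bullet> x - (b \<circ> skip j) i)) + q \<bullet> x + c"
          using feq[of x] sum_skip[OF j(1), of "\<lambda>i. a i * T i x"] j(2) by (simp add: T_def)
      qed
      then show ?thesis using less.IH[of "m-1"] j by auto
    next
      assume "\<exists>i<m. \<exists>j<m. i \<noteq> j \<and> ((v i, b i) = (v j, b j) \<or> (v i, b i) = (- v j, - b j))"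
      then obtain i j where ij: "i < m" "j < m" "i \<noteq> j"
        and hyp: "(v i, b i) = (v j, b j) \<or> (v i, b i) = (- v j, - b j)" by blast
      define a' where "a' = a(i := a i + a j)"
      define s where "s = (if (v i, b i) = (v j, b j) then 0 else 1::real)"
      have Tj: "a j * T j x = a j * T i x - s * a j * (v i \<bullet> x - b i)" for x
      proof (cases "(v i, b i) = (v j, b j)")
        case True
        then show ?thesis by (simp add: s_def T_def)
      next
        case False
        then have o: "v i = - v j" "b i = - b j" using hyp by auto
        have "T i x = T j x - (v j \<bullet> x - b j)"
          using relu_flip[of "v j \<bullet> x - b j"] unfolding T_def o by simp
        moreover have "v i \<bullet> x - b i = - (v j \<bullet> x - b j)" using o by simp
        ultimately have e: "T j x + v i \<bullet> x = b i + T i x" by (simp add: algebra_simps)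
        have "s = 1" using False by (simp add: s_def)
        then show ?thesis using arg_cong[OF e, of "(*) (a j)"] by (simp add: algebra_simps)
      qed
      have sa: "(\<Sum>k<m. a' k * T k x) = (\<Sum>k<m. a k * T k x) + a j * T i x" for x
      proof -
        have "(\<Sum>k<m. a' k * T k x) = (\<Sum>k<m. a k * T k x + (if k = i then a j * T i x else 0))"
          by (rule sum.cong) (auto simp: a'_def algebra_simps)
        also have "\<dots> = (\<Sum>k<m. a k * T k x) + a j * T i x"
          using ij by (simp add: sum.distrib)
        finally show ?thesis .
      qed
      have "rep f (m-1) (a' \<circ> skip j) (v \<circ> skip j) (b \<circ> skip j) (q - (s * a j) *\<^sub>R v i) (c + s * a j * b i)"
        unfolding rep_def
      proof (intro conjI allI impI)
        fix k assume "k < m - 1" then show "norm ((v \<circ> skip j) k) = 1" using unit skip_less[OF ij(2)] by auto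
      next
        fix x
        have a'j: "a' j = a j" using ij by (simp add: a'_def)
        have "f x = (\<Sum>k<m. a' k * T k x) - a j * T i x + q \<bullet> x + c" using feq[of x] sa[of x] by simp
        also have "\<dots> = (\<Sum>k<m-1. a' (skip j k) * T (skip j k) x) + a j * T j x - a j * T i x + q \<bullet> x + c"
          using sum_skip[OF ij(2), of "\<lambda>k. a' k * T k x"] a'j by simp
        also have "\<dots> = (\<Sum>k<m-1. a' (skip j k) * T (skip j k) x) + (q - (s * a j) *\<^sub>R v i) \<bullet> x + (c + s * a j * b i)"
          using Tj[of x] by (simp add: inner_diff_left algebra_simps)
        finally show "f x = (\<Sum>k<m-1. (a' \<circ> skip j) k * relu ((v \<circ> skip j) k \<bullet> x - (b \<circ> skip j) k)) + (q - (s * a j) *\<^sub>R v i) \<bullet> x + (c + s * a j * b i)"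
          by (simp add: T_def)
      qed
      then show ?thesis using less.IH[of "m-1"] ij by auto
    qed
  qed
qed



lemma sum_at_most_one:
  fixes X :: real
  assumes "finite A" "X \<ge> 0" "\<And>k k'. k \<in> A \<Longrightarrow> k' \<in> A \<Longrightarrow> P k \<Longrightarrow> P k' \<Longrightarrow> k = k'"
  shows "(\<Sum>k\<in>A. if P k then X else 0) \<le> X"
proof (cases "\<exists>k\<in>A. P k")
  case True
  then obtain k0 where k0: "k0 \<in> A" "P k0" by blast
  have "(\<Sum>k\<in>A. if P k then X else 0) = (\<Sum>k\<in>A. if k = k0 then X else 0)"
    by (rule sum.cong) (use assms(3) k0 in auto)
  also have "\<dots> = X" using k0 assms(1) by simp
  finally show ?thesis by simp
next
  case False
  then have "(\<Sum>k\<in>A. if P k then X else 0) = 0" by (intro sum.neutral) auto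
  then show ?thesis using assms(2) by simp
qed

lemma radon_bound:
  fixes g :: "'a::euclidean_space \<Rightarrow> real \<Rightarrow> real"
  assumes r: "rep f M a v b q c"
    and gnn: "\<And>w \<beta>. g w \<beta> \<ge> 0"
    and gsym: "\<And>w \<beta>. g (-w) (-\<beta>) = g w \<beta>"
    and gh: "\<And>i. i < M \<Longrightarrow> g (v i) (b i) \<le> h i"
  shows "radon_norm g f \<le> (\<Sum>i<M. \<bar>a i\<bar> * h i)"
proof -
  have ex: "\<exists>r. \<exists>m a v b q c. canon_repr f m a v b q c \<and> r = (\<Sum>i<m. \<bar>a i\<bar> * g (v i) (b i))"
    using rep_canon[OF r] by blast
  obtain m' a' v' b' q' c' where can: "canon_repr f m' a' v' b' q' c'"
    and rn: "radon_norm g f = (\<Sum>i<m'. \<bar>a' i\<bar> * g (v' i) (b' i))"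
    using someI_ex[OF ex] unfolding radon_norm_def by blast
  have unit': "\<forall>i<m'. norm (v' i) = 1" and nz: "\<forall>i<m'. a' i \<noteq> 0"
    and dist: "\<forall>i<m'. \<forall>j<m'. i \<noteq> j \<longrightarrow> (v' i, b' i) \<noteq> (v' j, b' j) \<and> (v' i, b' i) \<noteq> (- v' j, - b' j)"
    and f': "\<forall>x. f x = (\<Sum>i<m'. a' i * relu (v' i \<bullet> x - b' i)) + q' \<bullet> x + c'"
    using can unfolding canon_repr_def by auto
  have unit: "\<forall>i<M. norm (v i) = 1" and f: "\<forall>x. f x = (\<Sum>i<M. a i * relu (v i \<bullet> x - b i)) + q \<bullet> x + c"
    using r unfolding rep_def by auto
  define cls where "cls k i \<longleftrightarrow> (v i, b i) = (v' k, b' k) \<or> (v i, b i) = (- v' k, - b' k)" for k i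
  have hnn: "h i \<ge> 0" if "i < M" for i using gh[OF that] gnn[of "v i" "b i"] by linarith
  have ak: "a' k = (\<Sum>i<M. if cls k i then a i else 0)" if k: "k < m'" for k
  proof -
    define C where "C = case_sum a' (\<lambda>i. - a i)"
    define V where "V = case_sum v' v"
    define Bb where "Bb = case_sum b' b"
    have fin: "finite ({..<m'} <+> {..<M})" by simp
    have un: "\<forall>\<kappa>\<in>{..<m'} <+> {..<M}. norm (V \<kappa>) = 1" using unit unit' by (auto simp: V_def)
    have eq: "\<forall>x. (\<Sum>\<kappa>\<in>{..<m'} <+> {..<M}. C \<kappa> * relu (V \<kappa> \<bullet> x - Bb \<kappa>)) + (q' - q) \<bullet> x + (c' - c) = 0"
    proof
      fix x
      have "(\<Sum>\<kappa>\<in>{..<m'} <+> {..<M}. C \<kappa> * relu (V \<kappa> \<bullet> x - Bb \<kappa>)) =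
        (\<Sum>i<m'. a' i * relu (v' i \<bullet> x - b' i)) - (\<Sum>i<M. a i * relu (v i \<bullet> x - b i))"
        by (simp add: sum.Plus C_def V_def Bb_def o_def sum_negf)
      then show "(\<Sum>\<kappa>\<in>{..<m'} <+> {..<M}. C \<kappa> * relu (V \<kappa> \<bullet> x - Bb \<kappa>)) + (q' - q) \<bullet> x + (c' - c) = 0"
        using f[rule_format, of x] f'[rule_format, of x] by (simp add: inner_diff_left)
    qed
    have kz: "(\<Sum>\<kappa>\<in>{\<kappa>\<in>{..<m'} <+> {..<M}. (V \<kappa>, Bb \<kappa>) = (v' k, b' k) \<or> (V \<kappa>, Bb \<kappa>) = (- v' k, - b' k)}. C \<kappa>) = 0"
      by (rule kink_zero[OF fin un _ eq]) (use unit' k in auto)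
    have s1: "(\<Sum>i<m'. if (v' i, b' i) = (v' k, b' k) \<or> (v' i, b' i) = (- v' k, - b' k) then a' i else 0) = a' k"
    proof -
      have "(\<Sum>i<m'. if (v' i, b' i) = (v' k, b' k) \<or> (v' i, b' i) = (- v' k, - b' k) then a' i else 0)
          = (\<Sum>i<m'. if i = k then a' i else 0)"
        by (rule sum.cong) (use dist k in auto)
      then show ?thesis using k by simp
    qed
    have "0 = (\<Sum>\<kappa>\<in>{..<m'} <+> {..<M}. if (V \<kappa>, Bb \<kappa>) = (v' k, b' k) \<or> (V \<kappa>, Bb \<kappa>) = (- v' k, - b' k) then C \<kappa> else 0)"
      using kz by (simp add: sum.inter_filter[OF fin])
    also have "\<dots> = (\<Sum>i<m'. if (v' i, b' i) = (v' k, b' k) \<or> (v' i, b' i) = (- v' k, - b' k) then a' i else 0)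
       + (\<Sum>i<M. - (if cls k i then a i else 0))"
      unfolding C_def V_def Bb_def cls_def by (simp add: sum.Plus o_def cong: if_cong, intro sum.cong) auto
    also have "\<dots> = a' k - (\<Sum>i<M. if cls k i then a i else 0)"
      using s1 by (simp add: sum_negf)
    finally show ?thesis by simp
  qed
  have "radon_norm g f \<le> (\<Sum>k<m'. \<Sum>i<M. if cls k i then \<bar>a i\<bar> * h i else 0)"
    unfolding rn
  proof (rule sum_mono)
    fix k assume k: "k \<in> {..<m'}"
    have "\<bar>a' k\<bar> * g (v' k) (b' k) \<le> (\<Sum>i<M. \<bar>if cls k i then a i else 0\<bar>) * g (v' k) (b' k)"
      using ak[of k] k by (auto intro!: mult_right_mono gnn sum_abs)
    also have "\<dots> = (\<Sum>i<M. if cls k i then \<bar>a i\<bar> * g (v i) (b i) else 0)"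
      unfolding sum_distrib_right
      by (rule sum.cong) (auto simp: cls_def gsym)
    also have "\<dots> \<le> (\<Sum>i<M. if cls k i then \<bar>a i\<bar> * h i else 0)"
      by (rule sum_mono) (auto intro!: mult_left_mono gh)
    finally show "\<bar>a' k\<bar> * g (v' k) (b' k) \<le> (\<Sum>i<M. if cls k i then \<bar>a i\<bar> * h i else 0)" .
  qed
  also have "\<dots> = (\<Sum>i<M. \<Sum>k<m'. if cls k i then \<bar>a i\<bar> * h i else 0)"
    by (rule sum.swap)
  also have "\<dots> \<le> (\<Sum>i<M. \<bar>a i\<bar> * h i)"
  proof (rule sum_mono)
    fix i assume i: "i \<in> {..<M}"
    show "(\<Sum>k<m'. if cls k i then \<bar>a i\<bar> * h i else 0) \<le> \<bar>a i\<bar> * h i"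
    proof (rule sum_at_most_one)
      show "0 \<le> \<bar>a i\<bar> * h i" using hnn i by simp
    next
      fix k k' assume kk: "k \<in> {..<m'}" "k' \<in> {..<m'}" "cls k i" "cls k' i"
      show "k = k'"
      proof (rule ccontr)
        assume "k \<noteq> k'"
        then have "(v' k, b' k) \<noteq> (v' k', b' k') \<and> (v' k, b' k) \<noteq> (- v' k', - b' k')"
          using dist kk by auto
        then show False using kk(3,4) unfolding cls_def by auto
      qed
    qed simp
  qed
  finally show ?thesis .
qed



lemma g_tilde_nonneg: "g_tilde xs n v b \<ge> 0"
  unfolding g_tilde_def Let_def
  by (auto intro!: mult_nonneg_nonneg divide_nonneg_nonneg sum_nonneg)

lemma g_weight_nonneg: "g_weight xs n v b \<ge> 0"
  by (simp add: g_weight_def g_tilde_nonneg)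

lemma g_weight_sym: "g_weight xs n (-v) (-b) = g_weight xs n v b"
  unfolding g_weight_def by (simp add: min.commute)

lemma g_weight_le: "g_weight xs n v b \<le> g_tilde xs n v b"
  unfolding g_weight_def by simp

lemma relu_scale: "c > 0 \<Longrightarrow> relu (y / c) = relu y / c"
  by (auto simp: relu_def max_def divide_le_0_iff)

definition unitv :: "'a::euclidean_space" where "unitv = (SOME u. norm u = (1::real))"

lemma norm_unitv: "norm (unitv :: 'a::euclidean_space) = 1"
proof -
  obtain u :: 'a where "u \<in> Basis" using nonempty_Basis by blast
  then have "\<exists>u::'a. norm u = 1" by (metis norm_Basis)
  then show ?thesis unfolding unitv_def by (rule someI_ex)
qed

lemma net_rep:
  fixes W1 :: "'a::euclidean_space ^ 'k::finite" and b1 w2 :: "real ^ 'k" and b2 :: real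
  assumes e: "bij_betw e {..<CARD('k)} (UNIV :: 'k set)"
  defines "a \<equiv> \<lambda>k. w2 $ e k * norm (W1 $ e k)"
    and "v \<equiv> \<lambda>k. if W1 $ e k = 0 then unitv else W1 $ e k /\<^sub>R norm (W1 $ e k)"
    and "bb \<equiv> \<lambda>k. - (b1 $ e k) / norm (W1 $ e k)"
    and "c \<equiv> b2 + (\<Sum>i\<in>UNIV. if W1 $ i = 0 then w2 $ i * relu (b1 $ i) else 0)"
  shows "rep (net (W1, b1, w2, b2)) CARD('k) a v bb 0 c"
proof -
  have tm: "w2 $ i * relu (x \<bullet> W1 $ i + b1 $ i) =
     w2 $ i * norm (W1 $ i) * relu ((if W1 $ i = 0 then unitv else W1 $ i /\<^sub>R norm (W1 $ i)) \<bullet> x - (- (b1 $ i) / norm (W1 $ i)))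
     + (if W1 $ i = 0 then w2 $ i * relu (b1 $ i) else 0)" for i x
  proof (cases "W1 $ i = 0")
    case True then show ?thesis by simp
  next
    case False
    then have n: "norm (W1 $ i) > 0" by simp
    have "(W1 $ i /\<^sub>R norm (W1 $ i)) \<bullet> x - (- (b1 $ i) / norm (W1 $ i)) = (x \<bullet> W1 $ i + b1 $ i) / norm (W1 $ i)"
      using n by (simp add: inner_commute field_simps)
    then show ?thesis using False n by (simp add: relu_scale)
  qed
  show ?thesis
    unfolding rep_def
  proof (intro conjI allI impI)
    fix k assume "k < CARD('k)"
    show "norm (v k) = 1" unfolding v_def by (simp add: norm_unitv)
  next
    fix x
    have "net (W1, b1, w2, b2) x = (\<Sum>i\<in>UNIV. w2 $ i * relu (x \<bullet> W1 $ i + b1 $ i)) + b2"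
      by (simp add: net_def)
    also have "(\<Sum>i\<in>UNIV. w2 $ i * relu (x \<bullet> W1 $ i + b1 $ i)) =
      (\<Sum>i\<in>UNIV. w2 $ i * norm (W1 $ i) * relu ((if W1 $ i = 0 then unitv else W1 $ i /\<^sub>R norm (W1 $ i)) \<bullet> x - (- (b1 $ i) / norm (W1 $ i))))
      + (\<Sum>i\<in>UNIV. if W1 $ i = 0 then w2 $ i * relu (b1 $ i) else 0)"
      by (subst tm) (simp add: sum.distrib)
    also have "(\<Sum>i\<in>UNIV. w2 $ i * norm (W1 $ i) * relu ((if W1 $ i = 0 then unitv else W1 $ i /\<^sub>R norm (W1 $ i)) \<bullet> x - (- (b1 $ i) / norm (W1 $ i))))
       = (\<Sum>k<CARD('k). a k * relu (v k \<bullet> x - bb k))"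
      unfolding a_def v_def bb_def
      using sum.reindex_bij_betw[OF e, of "\<lambda>i. w2 $ i * norm (W1 $ i) * relu ((if W1 $ i = 0 then unitv else W1 $ i /\<^sub>R norm (W1 $ i)) \<bullet> x - (- (b1 $ i) / norm (W1 $ i)))"]
      by simp
    finally show "net (W1, b1, w2, b2) x = (\<Sum>k<CARD('k). a k * relu (v k \<bullet> x - bb k)) + 0 \<bullet> x + c"
      unfolding c_def by simp
  qed
qed

lemma g_tilde_neuron:
  fixes W :: "'a::euclidean_space" and xs :: "nat \<Rightarrow> 'a" and \<beta> :: real
  assumes W: "W \<noteq> 0" and n: "n \<ge> 1"
  defines "A \<equiv> {j. j < n \<and> xs j \<bullet> W + \<beta> > 0}"
  shows "norm W * g_tilde xs n (W /\<^sub>R norm W) (- \<beta> / norm W) =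
     ((\<Sum>j\<in>A. xs j \<bullet> W + \<beta>) / n) * sqrt ((norm ((1 / real n) *\<^sub>R (\<Sum>j\<in>A. xs j)))^2 + (real (card A) / n)^2)"
proof -
  have nW: "norm W > 0" using W by simp
  have S: "{j. j < n \<and> xs j \<bullet> (W /\<^sub>R norm W) > - \<beta> / norm W} = A"
  proof -
    have "xs j \<bullet> (W /\<^sub>R norm W) > - \<beta> / norm W \<longleftrightarrow> xs j \<bullet> W + \<beta> > 0" for j
      using nW by (simp add: inner_commute field_simps, linarith)
    then show ?thesis unfolding A_def by auto
  qed
  have finA: "finite A" unfolding A_def by simp
  show ?thesis
  proof (cases "A = {}")
    case True
    then show ?thesis unfolding g_tilde_def Let_def S by simp
  next
    case False
    then have cA: "card A > 0" using finA by (simp add: card_gt_0_iff)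
    define s where "s = (\<Sum>j\<in>A. xs j)"
    define m where "m = real (card A)"
    have m0: "m > 0" using cA by (simp add: m_def)
    have nn: "real n > 0" using n by simp
    have sumz: "(\<Sum>j\<in>A. xs j \<bullet> (W /\<^sub>R norm W) - - \<beta> / norm W) = (\<Sum>j\<in>A. xs j \<bullet> W + \<beta>) / norm W"
      unfolding sum_divide_distrib using nW by (intro sum.cong) (auto simp: inner_commute field_simps)
    have g: "g_tilde xs n (W /\<^sub>R norm W) (- \<beta> / norm W) =
      (m / n)^2 * (((\<Sum>j\<in>A. xs j \<bullet> W + \<beta>) / norm W) / m) * sqrt ((norm ((1 / m) *\<^sub>R s))^2 + 1)"
      unfolding g_tilde_def Let_def S using False sumz by (simp add: m_def s_def)
    have sq: "(m / n) * sqrt ((norm ((1 / m) *\<^sub>R s))^2 + 1) = sqrt ((norm ((1 / real n) *\<^sub>R s))^2 + (m / n)^2)"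
    proof -
      have "(norm ((1 / m) *\<^sub>R s))^2 + 1 = ((norm s)^2 + m^2) / m^2" using m0 by (simp add: field_simps)
      moreover have "(norm ((1 / real n) *\<^sub>R s))^2 + (m / n)^2 = ((norm s)^2 + m^2) / (real n)^2"
        using nn by (simp add: field_simps)
      moreover have "sqrt (((norm s)^2 + m^2) / m^2) = sqrt ((norm s)^2 + m^2) / m"
        using m0 by (simp add: real_sqrt_divide)
      moreover have "sqrt (((norm s)^2 + m^2) / (real n)^2) = sqrt ((norm s)^2 + m^2) / n"
        using nn by (simp add: real_sqrt_divide)
      ultimately show ?thesis using m0 nn by (simp add: field_simps)
    qed
    have "norm W * g_tilde xs n (W /\<^sub>R norm W) (- \<beta> / norm W)
       = ((\<Sum>j\<in>A. xs j \<bullet> W + \<beta>) / n) * ((m / n) * sqrt ((norm ((1 / m) *\<^sub>R s))^2 + 1))"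
      unfolding g using nW m0 nn by (simp add: field_simps power2_eq_square)
    also have "\<dots> = ((\<Sum>j\<in>A. xs j \<bullet> W + \<beta>) / n) * sqrt ((norm ((1 / real n) *\<^sub>R s))^2 + (m / n)^2)"
      by (simp only: sq)
    finally show ?thesis by (simp add: s_def m_def)
  qed
qed



lemma relu_sq_not_diff:
  assumes "s * w \<noteq> (0::real)"
  shows "\<not> ((\<lambda>t. (s + w * relu t)^2 / 2) has_derivative (\<lambda>t. t * D)) (at 0)"
proof
  assume "((\<lambda>t. (s + w * relu t)^2 / 2) has_derivative (\<lambda>t. t * D)) (at 0)"
  then have "((\<lambda>t. (s + w * relu t)^2 / 2) has_field_derivative D) (at 0)"
    by (rule has_derivative_imp_has_field_derivative) simp
  then have lim: "((\<lambda>t. ((s + w * relu t)^2 / 2 - (s + w * relu 0)^2 / 2) / (t - 0)) \<longlongrightarrow> D) (at 0)"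
    by (simp add: has_field_derivative_iff)
  define Q where "Q t = ((s + w * relu t)^2 / 2 - (s + w * relu 0)^2 / 2) / (t - 0)" for t
  have lq: "(Q \<longlongrightarrow> D) (at_left 0)" "(Q \<longlongrightarrow> D) (at_right 0)"
    using lim unfolding Q_def filterlim_at_split by auto
  have evl: "\<forall>\<^sub>F t in at_left (0::real). t \<in> {-1<..<0}" by (rule eventually_at_left_real) simp
  have evr: "\<forall>\<^sub>F t in at_right (0::real). t \<in> {0<..<1}" by (rule eventually_at_right_real) simp
  have "\<forall>\<^sub>F t in at_left 0. Q t = 0"
    using evl by eventually_elim (auto simp: Q_def relu_def)
  then have "(Q \<longlongrightarrow> 0) (at_left 0)" by (rule tendsto_eventually)
  then have D0: "D = 0" using lq(1) by (intro tendsto_unique) auto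
  have "\<forall>\<^sub>F t in at_right 0. Q t = s * w + w^2 * t / 2"
    using evr by eventually_elim (auto simp: Q_def relu_def field_simps power2_eq_square)
  moreover have "((\<lambda>t. s * w + w^2 * t / 2) \<longlongrightarrow> s * w + w^2 * 0 / 2) (at_right (0::real))"
    by (intro tendsto_intros) auto
  ultimately have "(Q \<longlongrightarrow> s * w) (at_right 0)"
    by (simp add: tendsto_cong)
  then have "D = s * w" using lq(2) by (intro tendsto_unique) auto
  then show False using D0 assms by simp
qed

lemma no_kink_at_data:
  fixes ths :: "('a::euclidean_space, 'k::finite) params"
  assumes der: "\<And>th. th \<in> ball ths e \<Longrightarrow> (l has_derivative (\<lambda>h. G th \<bullet> h)) (at th)"
    and e: "e > 0"
    and l: "\<And>th. l th = (net th x - y)^2 / 2"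
    and y: "net ths x = y"
  shows "x \<bullet> (fst ths $ i) + fst (snd ths) $ i \<noteq> 0"
proof
  assume z: "x \<bullet> (fst ths $ i) + fst (snd ths) $ i = 0"
  obtain W1 b1 w2 b2 where ths: "ths = (W1, b1, w2, b2)" by (cases ths) auto
  define s where "s = (if w2 $ i + e/4 \<noteq> 0 then e/4 else - e/4)"
  have s0: "s \<noteq> 0" and ws: "w2 $ i + s \<noteq> 0" and sa: "\<bar>s\<bar> = e/4"
    using e by (auto simp: s_def)
  define th' where "th' = (W1, b1, w2 + s *\<^sub>R axis i 1, b2 + s)"
  have "dist th' ths = norm ((0::'a^'k), (0::real^'k), s *\<^sub>R axis i (1::real), s)"
    unfolding th'_def ths dist_norm by simp
  also have "\<dots> \<le> norm (0::'a^'k) + (norm (0::real^'k) + (norm (s *\<^sub>R axis i (1::real)) + norm s))"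
    by (meson add_left_mono norm_Pair_le order_trans)
  also have "\<dots> = e/2" using sa by simp
  finally have "th' \<in> ball ths e" using e by (simp add: dist_commute)
  then have d: "(l has_derivative (\<lambda>h. G th' \<bullet> h)) (at th')" by (rule der)
  define E where "E = ((0::'a^'k), axis i (1::real), (0::real^'k), (0::real))"
  have g: "((\<lambda>t. th' + t *\<^sub>R E) has_derivative (\<lambda>t. t *\<^sub>R E)) (at 0)"
    by (auto intro!: derivative_eq_intros)
  have comp: "((\<lambda>t. l (th' + t *\<^sub>R E)) has_derivative (\<lambda>t. G th' \<bullet> (t *\<^sub>R E))) (at 0)"
    using has_derivative_compose[OF g, of l "\<lambda>h. G th' \<bullet> h"] d by (simp add: o_def)
  define w where "w = w2 $ i + s"
  define R where "R = (\<Sum>k\<in>UNIV - {i}. w2 $ k * relu (x \<bullet> W1 $ k + b1 $ k))"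
  have zi: "x \<bullet> W1 $ i + b1 $ i = 0" using z ths by simp
  have zi2: "x \<bullet> W1 $ i + (b1 $ i + t) = t" for t using zi by simp
  have net0: "net ths x = R + b2"
    unfolding ths net_def R_def
    by (simp add: sum.remove[of UNIV i] zi relu_def)
  have "net (th' + t *\<^sub>R E) x = R + w * relu t + b2 + s" for t
  proof -
    have "net (th' + t *\<^sub>R E) x = (\<Sum>k\<in>UNIV. (w2 $ k + s * axis i 1 $ k) * relu (x \<bullet> W1 $ k + (b1 $ k + t * axis i 1 $ k))) + (b2 + s)"
      unfolding th'_def E_def net_def by simp
    also have "(\<Sum>k\<in>UNIV. (w2 $ k + s * axis i 1 $ k) * relu (x \<bullet> W1 $ k + (b1 $ k + t * axis i 1 $ k)))
       = w * relu t + R"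
      unfolding R_def w_def
      by (simp add: sum.remove[of UNIV i] zi zi2 axis_def)
    finally show ?thesis by simp
  qed
  then have lq2: "l (th' + t *\<^sub>R E) = (s + w * relu t)^2 / 2" for t
  proof -
    assume h: "\<And>t. net (th' + t *\<^sub>R E) x = R + w * relu t + b2 + s"
    have "net (th' + t *\<^sub>R E) x - y = s + w * relu t" using h[of t] y net0 by simp
    then show ?thesis using l by simp
  qed
  then have "((\<lambda>t. (s + w * relu t)^2 / 2) has_derivative (\<lambda>t. t * (G th' \<bullet> E))) (at 0)"
  proof -
    have "(\<lambda>t. l (th' + t *\<^sub>R E)) = (\<lambda>t. (s + w * relu t)^2 / 2)" using lq2 by auto
    then show ?thesis using comp by (simp add: inner_commute)
  qed
  moreover have "s * w \<noteq> 0" using s0 ws by (simp add: w_def)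
  ultimately show False using relu_sq_not_diff by blast
qed



definition dnet :: "'a::euclidean_space \<Rightarrow> ('a, 'k::finite) params \<Rightarrow> ('a, 'k) params \<Rightarrow> real" where
  "dnet x ths h = (\<Sum>i\<in>{i. x \<bullet> (fst ths $ i) + fst (snd ths) $ i > 0}.
      fst (snd (snd h)) $ i * (x \<bullet> (fst ths $ i) + fst (snd ths) $ i)
      + fst (snd (snd ths)) $ i * (x \<bullet> (fst h $ i) + fst (snd h) $ i)) + snd (snd (snd h))"

lemma has_derivative_vec_nth' [derivative_intros]:
  "(f has_derivative f') F \<Longrightarrow> ((\<lambda>x. f x $ i) has_derivative (\<lambda>h. f' h $ i)) F"
  using bounded_linear.has_derivative[OF bounded_linear_vec_nth] .

lemma hess:
  fixes ths :: "('a::euclidean_space, 'k::finite) params"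
  assumes twice: "twice_diff_at l ths G H"
    and l: "\<And>th. l th = (net th x - y)^2 / 2"
    and y: "net ths x = y"
    and nz: "\<And>i. x \<bullet> (fst ths $ i) + fst (snd ths) $ i \<noteq> 0"
  shows "\<And>h k. H k \<bullet> h = dnet x ths k * dnet x ths h" and "G ths = 0"
proof -
  obtain e where e: "e > 0" and der: "\<And>th. th \<in> ball ths e \<Longrightarrow> (l has_derivative (\<lambda>h. G th \<bullet> h)) (at th)"
    and dG: "(G has_derivative H) (at ths)"
    using twice unfolding twice_diff_at_def by blast
  define z where "z th i = x \<bullet> (fst th $ i) + fst (snd th) $ i" for th :: "('a, 'k) params" and i
  define Sg where "Sg = {i. z ths i > 0}"
  define Pn where "Pn th = (\<Sum>i\<in>Sg. fst (snd (snd th)) $ i * z th i) + snd (snd (snd th))" for th :: "('a, 'k) params"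
  define dP where "dP th h = (\<Sum>i\<in>Sg. fst (snd (snd h)) $ i * z th i + fst (snd (snd th)) $ i * z h i) + snd (snd (snd h))"
    for th h :: "('a, 'k) params"
  have dP_eq: "dP ths h = dnet x ths h" for h
    unfolding dP_def dnet_def Sg_def z_def by (simp add: algebra_simps)
  have ev: "\<forall>\<^sub>F th in nhds ths. \<forall>i. (z th i > 0 \<longleftrightarrow> z ths i > 0) \<and> z th i \<noteq> 0"
  proof (rule eventually_all_finite)
    fix i
    have lim: "((\<lambda>th. z th i) \<longlongrightarrow> z ths i) (nhds ths)"
      unfolding z_def by (intro tendsto_intros filterlim_ident)
    show "\<forall>\<^sub>F th in nhds ths. (z th i > 0 \<longleftrightarrow> z ths i > 0) \<and> z th i \<noteq> 0"
    proof (cases "z ths i > 0")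
      case True
      have "\<forall>\<^sub>F th in nhds ths. z th i > 0" by (rule order_tendstoD(1)[OF lim True])
      then show ?thesis by eventually_elim (use True in auto)
    next
      case False
      then have "z ths i < 0" using nz[of i] unfolding z_def by linarith
      then have "\<forall>\<^sub>F th in nhds ths. z th i < 0" by (rule order_tendstoD(2)[OF lim])
      then show ?thesis by eventually_elim (use False in auto)
    qed
  qed
  then obtain U where U: "open U" "ths \<in> U" "\<And>th i. th \<in> U \<Longrightarrow> (z th i > 0 \<longleftrightarrow> z ths i > 0)"
    unfolding eventually_nhds by blast
  define V where "V = U \<inter> ball ths e"
  have V: "open V" "ths \<in> V" using U e unfolding V_def by auto
  have netP: "net th x = Pn th" if "th \<in> V" for th
  proof -
    obtain W1 b1 w2 b2 where th: "th = (W1, b1, w2, b2)" by (cases th) auto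
    have tw: "w2 $ i * relu (x \<bullet> W1 $ i + b1 $ i) = (if i \<in> Sg then w2 $ i * z th i else 0)" for i
    proof -
      have "z th i > 0 \<longleftrightarrow> i \<in> Sg" using U(3)[of th i] that unfolding V_def Sg_def by auto
      then show ?thesis unfolding z_def th by (auto simp: relu_def)
    qed
    have "net th x = (\<Sum>i\<in>UNIV. if i \<in> Sg then w2 $ i * z th i else 0) + b2"
      using tw unfolding net_def th by simp
    also have "\<dots> = Pn th" unfolding Pn_def th by (simp add: sum.If_cases)
    finally show ?thesis .
  qed
  have dPn: "(Pn has_derivative dP th) (at th)" for th
    unfolding Pn_def dP_def z_def
    by (auto intro!: derivative_eq_intros simp: algebra_simps sum.distrib)
  have Gform: "G th \<bullet> h = (Pn th - y) * dP th h" if th: "th \<in> V" for th h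
  proof -
    have d1: "(l has_derivative (\<lambda>h. G th \<bullet> h)) (at th)" using der th unfolding V_def by auto
    have d2: "((\<lambda>th. (Pn th - y)^2 / 2) has_derivative (\<lambda>h. (Pn th - y) * dP th h)) (at th)"
      by (auto intro!: derivative_eq_intros dPn simp: power2_eq_square)
    have "(l has_derivative (\<lambda>h. (Pn th - y) * dP th h)) (at th)"
      by (rule has_derivative_transform_within_open[OF d2 V(1) th]) (simp add: l netP)
    then have "(\<lambda>h. G th \<bullet> h) = (\<lambda>h. (Pn th - y) * dP th h)" using d1 by (rule has_derivative_unique[rotated])
    then show ?thesis by metis
  qed
  have P0: "Pn ths = y" using netP[OF V(2)] y by simp
  show "G ths = 0"
    using Gform[OF V(2), of "G ths"] P0 by simp
  fix h k
  have lin: "linear (dP th)" for th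
    using has_derivative_linear[OF dPn] .
  have D2: "((\<lambda>th. dP th h) has_derivative (\<lambda>k. \<Sum>i\<in>Sg. fst (snd (snd h)) $ i * z k i + fst (snd (snd k)) $ i * z h i)) (at ths)"
    unfolding dP_def z_def by (auto intro!: derivative_eq_intros simp: algebra_simps sum.distrib)
  have a: "((\<lambda>th. (Pn th - y) * dP th h) has_derivative (\<lambda>k. dP ths k * dP ths h)) (at ths)"
    using has_derivative_mult[OF has_derivative_diff[OF dPn has_derivative_const[of y]] D2] P0
    by (simp add: algebra_simps)
  have b: "((\<lambda>th. G th \<bullet> h) has_derivative (\<lambda>k. H k \<bullet> h)) (at ths)"
    by (auto intro!: derivative_eq_intros dG)
  have "((\<lambda>th. (Pn th - y) * dP th h) has_derivative (\<lambda>k. H k \<bullet> h)) (at ths)"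
    by (rule has_derivative_transform_within_open[OF b V(1) V(2)]) (simp add: Gform)
  then have "(\<lambda>k. H k \<bullet> h) = (\<lambda>k. dP ths k * dP ths h)" using a by (rule has_derivative_unique)
  then show "H k \<bullet> h = dnet x ths k * dnet x ths h" using dP_eq by metis
qed



lemma card_batches_with:
  assumes j: "j < n" and B: "B \<ge> 1"
  shows "card {S \<in> batches n B. j \<in> S} = (n - 1) choose (B - 1)"
proof -
  have bij: "bij_betw (\<lambda>S. S - {j}) {S \<in> batches n B. j \<in> S} {T. T \<subseteq> {..<n} - {j} \<and> card T = B - 1}"
  proof (rule bij_betw_byWitness[where f' = "insert j"])
    show "\<forall>S\<in>{S \<in> batches n B. j \<in> S}. insert j (S - {j}) = S" by auto
    show "\<forall>T\<in>{T. T \<subseteq> {..<n} - {j} \<and> card T = B - 1}. insert j T - {j} = T" by auto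
    show "(\<lambda>S. S - {j}) ` {S \<in> batches n B. j \<in> S} \<subseteq> {T. T \<subseteq> {..<n} - {j} \<and> card T = B - 1}"
    proof
      fix T assume "T \<in> (\<lambda>S. S - {j}) ` {S \<in> batches n B. j \<in> S}"
      then obtain S where S: "S \<subseteq> {..<n}" "card S = B" "j \<in> S" "T = S - {j}"
        unfolding batches_def by auto
      have "finite S" using S(1) finite_subset by blast
      then show "T \<in> {T. T \<subseteq> {..<n} - {j} \<and> card T = B - 1}" using S by auto
    qed
    show "insert j ` {T. T \<subseteq> {..<n} - {j} \<and> card T = B - 1} \<subseteq> {S \<in> batches n B. j \<in> S}"
    proof
      fix S assume "S \<in> insert j ` {T. T \<subseteq> {..<n} - {j} \<and> card T = B - 1}"
      then obtain T where T: "T \<subseteq> {..<n} - {j}" "card T = B - 1" "S = insert j T" by auto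
      have "finite T" using T(1) finite_subset by blast
      moreover have "j \<notin> T" using T(1) by auto
      ultimately have "card S = B" using T B by auto
      then show "S \<in> {S \<in> batches n B. j \<in> S}" using T j unfolding batches_def by auto
    qed
  qed
  have "card {T. T \<subseteq> {..<n} - {j} \<and> card T = B - 1} = card ({..<n} - {j}) choose (B - 1)"
    by (rule n_subsets) simp
  also have "card ({..<n} - {j}) = n - 1" using j by simp
  finally show ?thesis using bij_betw_same_card[OF bij] by simp
qed

lemma finite_batches: "finite (batches n B)"
  unfolding batches_def by (rule finite_subset[of _ "Pow {..<n}"]) auto

lemma card_batches: "card (batches n B) = n choose B"
  unfolding batches_def using n_subsets[of "{..<n}" B] by simp

locale sgd_setup =
  fixes n B :: nat and \<eta> :: real and G H :: "nat \<Rightarrow> 'p::euclidean_space \<Rightarrow> 'p" and ths :: 'p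
  assumes n: "n \<ge> 1" and B: "B \<ge> 1" "B \<le> n" and eta: "\<eta> > 0"
    and G0: "\<And>j. j < n \<Longrightarrow> G j ths = 0"
    and Hlin: "\<And>j. j < n \<Longrightarrow> linear (H j)"
    and Hsym: "\<And>j a b. j < n \<Longrightarrow> H j a \<bullet> b = H j b \<bullet> a"
begin

definition Hbar :: "'p \<Rightarrow> 'p" where "Hbar v = (1 / real n) *\<^sub>R (\<Sum>j<n. H j v)"
definition Mop :: "'p \<Rightarrow> 'p" where "Mop v = v - \<eta> *\<^sub>R Hbar v"
definition NB :: real where "NB = real (card (batches n B))"

lemma Mop_linear: "linear Mop"
  unfolding linear_iff Mop_def Hbar_def
  by (simp add: Hlin linear_add linear_scale sum.distrib scaleR_sum_right algebra_simps)

lemma Mop_pow_linear: "linear (Mop ^^ t)"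
proof (induction t)
  case 0 then show ?case by (simp add: linear_id[unfolded id_def])
next
  case (Suc t)
  then show ?case using linear_compose[OF Suc Mop_linear] by (simp add: o_def)
qed

lemma Mop_sym: "Mop a \<bullet> b = a \<bullet> Mop b"
proof -
  have hs: "(\<Sum>j<n. H j a \<bullet> b) = (\<Sum>j<n. a \<bullet> H j b)"
    by (intro sum.cong refl) (metis Hsym inner_commute lessThan_iff)
  have "Hbar a \<bullet> b = a \<bullet> Hbar b"
    unfolding Hbar_def by (simp add: inner_sum_left inner_sum_right hs)
  then show ?thesis unfolding Mop_def by (simp add: inner_diff_left inner_diff_right)
qed

lemma NB_pos: "NB > 0" unfolding NB_def card_batches using B by simp

lemma batch_avg: "(\<Sum>S\<in>batches n B. lin_step \<eta> B G H ths th S - ths) = NB *\<^sub>R Mop (th - ths)"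
proof -
  define w where "w = th - ths"
  have step: "lin_step \<eta> B G H ths th S - ths = w - (\<eta> / B) *\<^sub>R (\<Sum>j\<in>S. H j w)" if "S \<in> batches n B" for S
  proof -
    have "(\<Sum>j\<in>S. G j ths + H j (th - ths)) = (\<Sum>j\<in>S. H j w)"
      using that G0 unfolding batches_def w_def by (intro sum.cong) auto
    then show ?thesis unfolding lin_step_def w_def by simp
  qed
  have swap: "(\<Sum>S\<in>batches n B. \<Sum>j\<in>S. H j w) = (\<Sum>j<n. real ((n - 1) choose (B - 1)) *\<^sub>R H j w)"
  proof -
    have "(\<Sum>S\<in>batches n B. \<Sum>j\<in>S. H j w) = (\<Sum>S\<in>batches n B. \<Sum>j\<in>{j. j \<in> {..<n} \<and> j \<in> S}. H j w)"
      by (intro sum.cong refl) (auto simp: batches_def)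
    also have "\<dots> = (\<Sum>j<n. \<Sum>S\<in>{S. S \<in> batches n B \<and> j \<in> S}. H j w)"
      by (rule sum.swap_restrict) (auto simp: finite_batches)
    also have "\<dots> = (\<Sum>j<n. real ((n - 1) choose (B - 1)) *\<^sub>R H j w)"
      by (intro sum.cong refl) (auto simp: card_batches_with[OF _ B(1)] sum_constant_scaleR)
    finally show ?thesis .
  qed
  have comb: "real B * real (n choose B) = real n * real ((n - 1) choose (B - 1))"
    using times_binomial_minus1_eq[of B n] B by (metis of_nat_mult not_one_le_zero not_gr0 of_nat_0_less_iff)
  have "(\<Sum>S\<in>batches n B. lin_step \<eta> B G H ths th S - ths) = (\<Sum>S\<in>batches n B. w - (\<eta> / B) *\<^sub>R (\<Sum>j\<in>S. H j w))"
    by (intro sum.cong refl step)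
  also have "\<dots> = NB *\<^sub>R w - (\<eta> / B) *\<^sub>R (\<Sum>S\<in>batches n B. \<Sum>j\<in>S. H j w)"
    by (simp add: sum_subtractf scaleR_sum_right NB_def sum_constant_scaleR)
  also have "\<dots> = NB *\<^sub>R w - (\<eta> / B * real ((n - 1) choose (B - 1))) *\<^sub>R (\<Sum>j<n. H j w)"
    unfolding swap by (simp add: scaleR_sum_right)
  also have "\<eta> / B * real ((n - 1) choose (B - 1)) = NB * \<eta> / n"
    unfolding NB_def card_batches using comb B n by (simp add: field_simps)
  also have "NB *\<^sub>R w - (NB * \<eta> / n) *\<^sub>R (\<Sum>j<n. H j w) = NB *\<^sub>R Mop w"
    unfolding Mop_def Hbar_def by (simp add: algebra_simps)
  finally show ?thesis unfolding w_def .
qed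

lemma iter_sum:
  "(\<Sum>bs\<in>{bs. length bs = t \<and> set bs \<subseteq> batches n B}. lin_iter \<eta> B G H ths th0 bs - ths)
     = (NB ^ t) *\<^sub>R (Mop ^^ t) (th0 - ths)"
proof (induction t arbitrary: th0)
  case 0
  have "{bs. length bs = 0 \<and> set bs \<subseteq> batches n B} = {[]}" by auto
  then show ?case by (simp add: lin_iter_def)
next
  case (Suc t)
  have eq: "{bs. length bs = Suc t \<and> set bs \<subseteq> batches n B} =
      (\<lambda>(xs, S). S # xs) ` ({bs. set bs \<subseteq> batches n B \<and> length bs = t} \<times> batches n B)"
    using lists_length_Suc_eq[of "batches n B" t] by (simp add: conj_commute)
  have inj: "inj_on (\<lambda>(xs, S). S # xs) ({bs. set bs \<subseteq> batches n B \<and> length bs = t} \<times> batches n B)"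
    by (auto simp: inj_on_def)
  have fin: "finite {bs. set bs \<subseteq> batches n B \<and> length bs = t}"
    by (rule finite_lists_length_eq[OF finite_batches])
  have "(\<Sum>bs\<in>{bs. length bs = Suc t \<and> set bs \<subseteq> batches n B}. lin_iter \<eta> B G H ths th0 bs - ths)
     = (\<Sum>(xs, S)\<in>{bs. set bs \<subseteq> batches n B \<and> length bs = t} \<times> batches n B. lin_iter \<eta> B G H ths th0 (S # xs) - ths)"
    unfolding eq by (subst sum.reindex[OF inj]) (simp add: case_prod_beta o_def)
  also have "\<dots> = (\<Sum>S\<in>batches n B. \<Sum>xs\<in>{bs. set bs \<subseteq> batches n B \<and> length bs = t}.
        lin_iter \<eta> B G H ths (lin_step \<eta> B G H ths th0 S) xs - ths)"
    by (subst sum.cartesian_product[symmetric]) (simp add: sum.swap[of _ _ "batches n B"] lin_iter_def case_prod_beta)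
  also have "\<dots> = (\<Sum>S\<in>batches n B. (NB ^ t) *\<^sub>R (Mop ^^ t) (lin_step \<eta> B G H ths th0 S - ths))"
    using Suc.IH by (simp add: conj_commute)
  also have "\<dots> = (NB ^ t) *\<^sub>R (Mop ^^ t) (\<Sum>S\<in>batches n B. lin_step \<eta> B G H ths th0 S - ths)"
    by (simp add: linear_sum[OF Mop_pow_linear] scaleR_sum_right)
  also have "\<dots> = (NB ^ Suc t) *\<^sub>R (Mop ^^ Suc t) (th0 - ths)"
    unfolding batch_avg by (simp add: linear_scale[OF Mop_pow_linear] funpow_swap1 mult.commute)
  finally show ?case .
qed

lemma expected_dev_ge: "expected_dev n B \<eta> G H ths th0 t \<ge> norm ((Mop ^^ t) (th0 - ths))"
proof -
  have "norm ((NB ^ t) *\<^sub>R (Mop ^^ t) (th0 - ths)) \<le>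
      (\<Sum>bs\<in>{bs. length bs = t \<and> set bs \<subseteq> batches n B}. norm (lin_iter \<eta> B G H ths th0 bs - ths))"
    unfolding iter_sum[symmetric] by (rule norm_sum)
  then have "NB ^ t * norm ((Mop ^^ t) (th0 - ths)) \<le>
      (\<Sum>bs\<in>{bs. length bs = t \<and> set bs \<subseteq> batches n B}. norm (lin_iter \<eta> B G H ths th0 bs - ths))"
    using NB_pos by simp
  then show ?thesis
    unfolding expected_dev_def using NB_pos by (simp add: field_simps NB_def)
qed

end



lemma pow_growth:
  fixes M :: "'p::real_inner \<Rightarrow> 'p"
  assumes lin: "linear M" and sym: "\<And>a b. M a \<bullet> b = a \<bullet> M b" and u: "norm u = 1"
  shows "norm ((M ^^ k) u) \<ge> \<bar>u \<bullet> M u\<bar> ^ k"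
proof -
  define c where "c = u \<bullet> M u"
  define y where "y k = (M ^^ k) u" for k
  have ySuc: "y (Suc k) = M (y k)" for k unfolding y_def by simp
  have A: "(norm (y (Suc k)))^2 \<ge> c^2 * (norm (y k))^2" for k
  proof (induction k)
    case 0
    have "\<bar>c\<bar> \<le> norm u * norm (M u)" unfolding c_def by (rule Cauchy_Schwarz_ineq2)
    then have "\<bar>c\<bar> \<le> norm (M u)" using u by simp
    then have "c^2 \<le> (norm (M u))^2" by (metis abs_ge_zero power2_abs power_mono)
    then show ?case using u by (simp add: y_def)
  next
    case (Suc k)
    have e: "(norm (y (Suc k)))^2 = y k \<bullet> y (Suc (Suc k))"
      by (simp add: ySuc power2_norm_eq_inner sym)
    also have "\<dots> \<le> norm (y k) * norm (y (Suc (Suc k)))" by (rule Cauchy_Schwarz_ineq2[THEN order_trans[OF abs_ge_self]])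
    finally have cs: "(norm (y (Suc k)))^2 \<le> norm (y k) * norm (y (Suc (Suc k)))" .
    show ?case
    proof (cases "norm (y k) = 0")
      case True
      then have "y (Suc k) = 0" using ySuc linear_0[OF lin] by simp
      then show ?thesis by simp
    next
      case False
      then have pos: "norm (y k) > 0" by simp
      have "c^2 * (norm (y (Suc k)))^2 * (norm (y k))^2 = (c^2 * (norm (y k))^2) * (norm (y (Suc k)))^2"
        by (simp add: algebra_simps)
      also have "\<dots> \<le> (norm (y (Suc k)))^2 * (norm (y (Suc k)))^2"
        using Suc.IH by (intro mult_right_mono) auto
      also have "\<dots> \<le> (norm (y k) * norm (y (Suc (Suc k))))^2"
        using cs by (metis power2_eq_square power_mono zero_le_power2)
      also have "\<dots> = (norm (y (Suc (Suc k))))^2 * (norm (y k))^2" by (simp add: algebra_simps power2_eq_square)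
      finally show ?thesis using pos by simp
    qed
  qed
  have Bk: "(norm (y k))^2 \<ge> (c^2)^k" for k
  proof (induction k)
    case 0 then show ?case using u by (simp add: y_def)
  next
    case (Suc k)
    have "(c^2)^Suc k = c^2 * (c^2)^k" by simp
    also have "\<dots> \<le> c^2 * (norm (y k))^2" using Suc.IH by (intro mult_left_mono) auto
    also have "\<dots> \<le> (norm (y (Suc k)))^2" by (rule A)
    finally show ?case .
  qed
  have "(\<bar>c\<bar>^k)^2 = (c^2)^k" by (metis power2_abs power_mult mult.commute)
  then have "(\<bar>c\<bar>^k)^2 \<le> (norm (y k))^2" using Bk[of k] by simp
  then have "\<bar>c\<bar>^k \<le> norm (y k)" by (rule power2_le_imp_le) simp
  then show ?thesis unfolding y_def c_def .
qed

context sgd_setup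
begin

lemma Hbar_linear: "linear Hbar"
  unfolding linear_iff Hbar_def
  by (simp add: Hlin linear_add linear_scale sum.distrib scaleR_sum_right algebra_simps)

lemma stable_bound:
  assumes eps: "\<epsilon> > 0"
    and stab: "\<forall>th0\<in>ball ths \<epsilon>. limsup (\<lambda>t. ereal (expected_dev n B \<eta> G H ths th0 t)) \<le> ereal \<epsilon>"
  shows "u \<bullet> Hbar u \<le> (2 / \<eta>) * (u \<bullet> u)"
proof (rule ccontr)
  assume "\<not> ?thesis"
  then have gt: "u \<bullet> Hbar u > (2 / \<eta>) * (u \<bullet> u)" by simp
  have u0: "u \<noteq> 0" using gt by (auto simp: linear_0[OF Hbar_linear])
  define v where "v = u /\<^sub>R norm u"
  have nv: "norm v = 1" using u0 by (simp add: v_def)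
  have "v \<bullet> Hbar v = (u \<bullet> Hbar u) / (norm u)^2"
    unfolding v_def by (simp add: linear_scale[OF Hbar_linear] power2_eq_square field_simps)
  also have "\<dots> > (2 / \<eta>) * (u \<bullet> u) / (norm u)^2" using divide_strict_right_mono[OF gt, of "(norm u)^2"] u0 by simp
  also have "(2 / \<eta>) * (u \<bullet> u) / (norm u)^2 = 2 / \<eta>" using u0 by (simp add: power2_norm_eq_inner)
  finally have vH: "v \<bullet> Hbar v > 2 / \<eta>" .
  define c where "c = v \<bullet> Mop v"
  have "c = 1 - \<eta> * (v \<bullet> Hbar v)" unfolding c_def Mop_def using nv by (simp add: inner_diff_right power2_norm_eq_inner[symmetric])
  moreover have "\<eta> * (v \<bullet> Hbar v) > 2" using vH eta by (simp add: field_simps)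
  ultimately have c1: "\<bar>c\<bar> > 1" by simp
  define th0 where "th0 = ths + (\<epsilon> / 2) *\<^sub>R v"
  have th0: "th0 \<in> ball ths \<epsilon>" using eps nv by (simp add: th0_def dist_norm)
  have low: "expected_dev n B \<eta> G H ths th0 t \<ge> (\<epsilon> / 2) * \<bar>c\<bar> ^ t" for t
  proof -
    have "norm ((Mop ^^ t) (th0 - ths)) = (\<epsilon> / 2) * norm ((Mop ^^ t) v)"
      unfolding th0_def using eps by (simp add: linear_scale[OF Mop_pow_linear])
    moreover have "norm ((Mop ^^ t) v) \<ge> \<bar>c\<bar> ^ t"
      unfolding c_def by (rule pow_growth[OF Mop_linear Mop_sym nv])
    moreover have "(\<epsilon> / 2) * \<bar>c\<bar> ^ t \<le> (\<epsilon> / 2) * norm ((Mop ^^ t) v)"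
      using calculation(2) eps by (intro mult_left_mono) auto
    ultimately show ?thesis using expected_dev_ge[of t th0] by linarith
  qed
  have "((\<lambda>t. ereal (expected_dev n B \<eta> G H ths th0 t)) \<longlongrightarrow> \<infinity>) sequentially"
    unfolding tendsto_PInfty
  proof
    fix r :: real
    obtain N where N: "2 * max r 0 / \<epsilon> < \<bar>c\<bar> ^ N" using real_arch_pow[OF c1] by blast
    show "\<forall>\<^sub>F t in sequentially. ereal r < ereal (expected_dev n B \<eta> G H ths th0 t)"
      unfolding eventually_sequentially
    proof (intro exI allI impI)
      fix t assume "N \<le> t"
      then have "\<bar>c\<bar> ^ N \<le> \<bar>c\<bar> ^ t" using c1 by (intro power_increasing) auto
      then have "2 * max r 0 / \<epsilon> < \<bar>c\<bar> ^ t" using N by linarith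
      then have "max r 0 < (\<epsilon> / 2) * \<bar>c\<bar> ^ t" using eps by (simp add: field_simps)
      then show "ereal r < ereal (expected_dev n B \<eta> G H ths th0 t)" using low[of t] by simp
    qed
  qed
  then have "limsup (\<lambda>t. ereal (expected_dev n B \<eta> G H ths th0 t)) = \<infinity>"
    by (intro lim_imp_Limsup) simp_all
  then show False using stab th0 by force
qed

end



theorem theorem1:
  fixes xs :: "nat \<Rightarrow> 'a::euclidean_space" and ys :: "nat \<Rightarrow> real"
    and n B :: nat and \<eta> :: real and f :: "'a \<Rightarrow> real"
  assumes "1 \<le> n" and "1 \<le> B" and "B \<le> n" and "\<eta> > 0"
    and "stable_solution TYPE('k::finite) xs ys n B \<eta> f"
    and "\<forall>j<n. xs j \<notin> knot_set f"
  shows "radon_norm (g_weight xs n) f \<le> 1 / \<eta> - 1 / 2"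
proof -
  note n = assms(1) and Bn = assms(2,3) and eta = assms(4)
  obtain ths :: "('a, 'k) params" where fy: "\<forall>j<n. f (xs j) = ys j" and fnet: "net ths = f"
    and ls: "linearly_stable xs ys n B \<eta> ths"
    using assms(5) unfolding stable_solution_def by blast
  obtain \<epsilon> G H where eps: "\<epsilon> > 0"
    and td: "\<And>j. j < n \<Longrightarrow> twice_diff_at (sample_loss xs ys j) ths (G j) (H j)"
    and stab: "\<forall>th0\<in>ball ths \<epsilon>. limsup (\<lambda>t. ereal (expected_dev n B \<eta> G H ths th0 t)) \<le> ereal \<epsilon>"
    using ls unfolding linearly_stable_def eps_linearly_stable_def by blast
  have y: "net ths (xs j) = ys j" if "j < n" for j using fy fnet that by auto
  have sl: "sample_loss xs ys j th = (net th (xs j) - ys j)^2 / 2" for j th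
    by (simp add: sample_loss_def)
  have nz: "xs j \<bullet> (fst ths $ i) + fst (snd ths) $ i \<noteq> 0" if j: "j < n" for j i
  proof -
    obtain e where e: "e > 0" and der: "\<And>th. th \<in> ball ths e \<Longrightarrow> (sample_loss xs ys j has_derivative (\<lambda>h. G j th \<bullet> h)) (at th)"
      using td[OF j] unfolding twice_diff_at_def by blast
    show ?thesis by (rule no_kink_at_data[OF der e sl y[OF j]])
  qed
  have hs: "H j k \<bullet> h = dnet (xs j) ths k * dnet (xs j) ths h" if j: "j < n" for j h k
    using hess(1)[OF td[OF j] sl y[OF j] nz[OF j]] by blast
  have G0: "G j ths = 0" if j: "j < n" for j
    using hess(2)[OF td[OF j] sl y[OF j] nz[OF j]] by blast
  have Hlin: "linear (H j)" if "j < n" for j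
    using td[OF that] unfolding twice_diff_at_def by (metis has_derivative_linear)
  have Hsym: "H j a \<bullet> b = H j b \<bullet> a" if "j < n" for j a b using hs[OF that] by simp
  have loc: "sgd_setup n B \<eta> G H ths"
    unfolding sgd_setup_def using n Bn eta G0 Hlin Hsym by blast
  interpret S: sgd_setup n B \<eta> G H ths by (rule loc)
  have SB: "u \<bullet> S.Hbar u \<le> (2 / \<eta>) * (u \<bullet> u)" for u
    by (rule S.stable_bound[OF eps stab])
  obtain W1 b1 w2 b2 where ths: "ths = (W1, b1, w2, b2)" by (cases ths) auto
  define z where "z j i = xs j \<bullet> W1 $ i + b1 $ i" for j i
  define A where "A i = {j. j < n \<and> z j i > 0}" for i
  define p where "p i = real (card (A i)) / n" for i
  define Sx where "Sx i = (1 / real n) *\<^sub>R (\<Sum>j\<in>A i. xs j)" for i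
  define Z where "Z i = (\<Sum>j\<in>A i. z j i) / n" for i
  define u :: "('a, 'k) params" where "u = ((\<chi> i. w2 $ i *\<^sub>R Sx i), (\<chi> i. w2 $ i * p i), (\<chi> i. Z i), 1)"
  define Q where "Q = (\<Sum>i\<in>UNIV. (Z i)^2 + (w2 $ i)^2 * ((norm (Sx i))^2 + (p i)^2))"
  have nn: "real n > 0" using n by simp
  have nsq: "norm x * norm x = x \<bullet> x" for x :: 'a
    by (metis power2_eq_square power2_norm_eq_inner)
  have uu: "u \<bullet> u = 1 + Q"
    unfolding u_def Q_def
    by (simp add: inner_vec_def inner_prod_def sum.distrib power2_eq_square algebra_simps nsq)
  have dn: "dnet (xs j) ths u = (\<Sum>i\<in>{i. z j i > 0}. Z i * z j i + (w2 $ i)^2 * (xs j \<bullet> Sx i + p i)) + 1" for j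
    unfolding dnet_def ths u_def z_def
    by (simp add: inner_scaleR_right power2_eq_square algebra_simps)
  have avg: "(1 / real n) * (\<Sum>j<n. dnet (xs j) ths u) = u \<bullet> u"
  proof -
    have "(\<Sum>j<n. \<Sum>i\<in>{i. z j i > 0}. Z i * z j i + (w2 $ i)^2 * (xs j \<bullet> Sx i + p i))
        = (\<Sum>i\<in>UNIV. \<Sum>j\<in>A i. Z i * z j i + (w2 $ i)^2 * (xs j \<bullet> Sx i + p i))"
      using sum.swap_restrict[of "{..<n}" "UNIV :: 'k set" "\<lambda>j i. Z i * z j i + (w2 $ i)^2 * (xs j \<bullet> Sx i + p i)" "\<lambda>j i. z j i > 0"]
      by (simp add: A_def)
    also have "\<dots> = (\<Sum>i\<in>UNIV. real n * ((Z i)^2 + (w2 $ i)^2 * ((norm (Sx i))^2 + (p i)^2)))"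
    proof (rule sum.cong[OF refl])
      fix i
      have finA: "finite (A i)" unfolding A_def by simp
      have "(\<Sum>j\<in>A i. Z i * z j i + (w2 $ i)^2 * (xs j \<bullet> Sx i + p i))
         = Z i * (\<Sum>j\<in>A i. z j i) + (w2 $ i)^2 * ((\<Sum>j\<in>A i. xs j) \<bullet> Sx i + real (card (A i)) * p i)"
        by (simp add: sum.distrib sum_distrib_left inner_sum_left algebra_simps)
      also have "(\<Sum>j\<in>A i. z j i) = real n * Z i" unfolding Z_def using nn by simp
      also have "(\<Sum>j\<in>A i. xs j) = real n *\<^sub>R Sx i" unfolding Sx_def using nn by simp
      also have "real (card (A i)) = real n * p i" unfolding p_def using nn by simp
      finally show "(\<Sum>j\<in>A i. Z i * z j i + (w2 $ i)^2 * (xs j \<bullet> Sx i + p i))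
         = real n * ((Z i)^2 + (w2 $ i)^2 * ((norm (Sx i))^2 + (p i)^2))"
        by (simp add: power2_eq_square algebra_simps nsq)
    qed
    finally have "(\<Sum>j<n. \<Sum>i\<in>{i. z j i > 0}. Z i * z j i + (w2 $ i)^2 * (xs j \<bullet> Sx i + p i)) = real n * Q"
      unfolding Q_def by (simp add: sum_distrib_left)
    then show ?thesis unfolding dn uu using nn by (simp add: sum.distrib field_simps)
  qed
  have uH: "u \<bullet> S.Hbar u = (1 / real n) * (\<Sum>j<n. (dnet (xs j) ths u)^2)"
  proof -
    have "u \<bullet> S.Hbar u = (1 / real n) * (\<Sum>j<n. H j u \<bullet> u)"
      unfolding S.Hbar_def by (simp add: inner_sum_right inner_commute)
    also have "(\<Sum>j<n. H j u \<bullet> u) = (\<Sum>j<n. (dnet (xs j) ths u)^2)"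
      by (intro sum.cong refl) (simp add: hs power2_eq_square)
    finally show ?thesis .
  qed
  have CS: "(\<Sum>j<n. dnet (xs j) ths u)^2 \<le> real n * (\<Sum>j<n. (dnet (xs j) ths u)^2)"
    using Cauchy_Schwarz_ineq_sum[of "\<lambda>_. 1" "\<lambda>j. dnet (xs j) ths u" "{..<n}"] by simp
  have "(u \<bullet> u)^2 \<le> u \<bullet> S.Hbar u"
  proof -
    have "(u \<bullet> u)^2 = (\<Sum>j<n. dnet (xs j) ths u)^2 / (real n)^2"
      unfolding avg[symmetric] by (simp add: power_divide)
    also have "\<dots> \<le> real n * (\<Sum>j<n. (dnet (xs j) ths u)^2) / (real n)^2"
      using CS nn by (intro divide_right_mono) auto
    also have "\<dots> = u \<bullet> S.Hbar u" unfolding uH using nn by (simp add: power2_eq_square)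
    finally show ?thesis .
  qed
  then have "(u \<bullet> u)^2 \<le> (2 / \<eta>) * (u \<bullet> u)" using SB[of u] by linarith
  moreover have Qnn: "Q \<ge> 0" unfolding Q_def by (intro sum_nonneg) auto
  ultimately have qq: "(1 + Q) * (1 + Q) \<le> (2 / \<eta>) * (1 + Q)" unfolding uu by (simp only: power2_eq_square)
  have Qb: "1 + Q \<le> 2 / \<eta>" by (rule mult_right_le_imp_le[OF qq]) (use Qnn in simp)
  obtain e where e: "bij_betw e {..<CARD('k)} (UNIV :: 'k set)"
    using ex_bij_betw_nat_finite[of "UNIV :: 'k set"] by (auto simp: atLeast0LessThan)
  define a where "a = (\<lambda>k. w2 $ e k * norm (W1 $ e k))"
  define v where "v = (\<lambda>k. if W1 $ e k = 0 then unitv else W1 $ e k /\<^sub>R norm (W1 $ e k))"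
  define bb where "bb = (\<lambda>k. - (b1 $ e k) / norm (W1 $ e k))"
  define c where "c = b2 + (\<Sum>i\<in>UNIV. if W1 $ i = 0 then w2 $ i * relu (b1 $ i) else 0)"
  have "rep (net (W1, b1, w2, b2)) CARD('k) a v bb 0 c"
    unfolding a_def v_def bb_def c_def by (rule net_rep[OF e])
  then have rp: "rep f CARD('k) a v bb 0 c" using fnet ths by simp
  have "radon_norm (g_weight xs n) f \<le> (\<Sum>k<CARD('k). \<bar>a k\<bar> * g_tilde xs n (v k) (bb k))"
    by (rule radon_bound[OF rp]) (simp_all add: g_weight_nonneg g_weight_sym g_weight_le)
  also have "\<dots> = (\<Sum>i\<in>UNIV. if W1 $ i = 0 then 0 else
      \<bar>w2 $ i\<bar> * (norm (W1 $ i) * g_tilde xs n (W1 $ i /\<^sub>R norm (W1 $ i)) (- (b1 $ i) / norm (W1 $ i))))"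
  proof -
    define F where "F i = (if W1 $ i = 0 then 0 else
      \<bar>w2 $ i\<bar> * (norm (W1 $ i) * g_tilde xs n (W1 $ i /\<^sub>R norm (W1 $ i)) (- (b1 $ i) / norm (W1 $ i))))" for i
    have "(\<Sum>k<CARD('k). \<bar>a k\<bar> * g_tilde xs n (v k) (bb k)) = (\<Sum>k<CARD('k). F (e k))"
      by (intro sum.cong refl) (auto simp: a_def v_def bb_def F_def abs_mult)
    also have "\<dots> = (\<Sum>i\<in>UNIV. F i)" by (rule sum.reindex_bij_betw[OF e])
    finally show ?thesis unfolding F_def .
  qed
  also have "\<dots> \<le> (\<Sum>i\<in>UNIV. ((Z i)^2 + (w2 $ i)^2 * ((norm (Sx i))^2 + (p i)^2)) / 2)"
  proof (rule sum_mono)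
    fix i
    have bnd: "\<bar>w2 $ i\<bar> * (Z i * sqrt ((norm (Sx i))^2 + (p i)^2)) \<le> ((Z i)^2 + (w2 $ i)^2 * ((norm (Sx i))^2 + (p i)^2)) / 2"
    proof -
      have "2 * (Z i) * (\<bar>w2 $ i\<bar> * sqrt ((norm (Sx i))^2 + (p i)^2)) \<le> (Z i)^2 + (\<bar>w2 $ i\<bar> * sqrt ((norm (Sx i))^2 + (p i)^2))^2"
        by (rule sum_squares_bound)
      also have "(\<bar>w2 $ i\<bar> * sqrt ((norm (Sx i))^2 + (p i)^2))^2 = (w2 $ i)^2 * ((norm (Sx i))^2 + (p i)^2)"
        by (simp add: power_mult_distrib)
      finally show ?thesis by (simp add: algebra_simps)
    qed
    show "(if W1 $ i = 0 then 0 else \<bar>w2 $ i\<bar> * (norm (W1 $ i) * g_tilde xs n (W1 $ i /\<^sub>R norm (W1 $ i)) (- (b1 $ i) / norm (W1 $ i))))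
        \<le> ((Z i)^2 + (w2 $ i)^2 * ((norm (Sx i))^2 + (p i)^2)) / 2"
    proof (cases "W1 $ i = 0")
      case True then show ?thesis by simp
    next
      case False
      have "norm (W1 $ i) * g_tilde xs n (W1 $ i /\<^sub>R norm (W1 $ i)) (- (b1 $ i) / norm (W1 $ i))
          = Z i * sqrt ((norm (Sx i))^2 + (p i)^2)"
        using g_tilde_neuron[OF False n, of xs "b1 $ i"]
        unfolding Z_def Sx_def p_def A_def z_def by simp
      then show ?thesis using False bnd by simp
    qed
  qed
  also have "\<dots> = Q / 2" unfolding Q_def by (simp add: sum_divide_distrib)
  also have "\<dots> \<le> 1 / \<eta> - 1 / 2" using Qb by (simp add: field_simps)
  finally show ?thesis .
qed


end
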